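(* Let $L\in4\mathbb{N}$, $t,m>0$ and $|U|$ small enough uniformly in $L$. For $(a,b)\in\{\pm1\}^2$ and a gauge-field configuration $\bm\sigma\in\{\pm1\}^{\text{edges}}$ with product $-1$ around every plaquette and products $a$, $b$ along $\mathcal{C}_1$, $\mathcal{C}_2$, let $$|\Omega_{ab}\rangle=\prod_{i\in\Gamma_L}\Big(\frac{1+Q_i}{2}\Big)|\psi_{\bm\sigma}\rangle\otimes|\bm\sigma\rangle .$$ Then: (1) $|\Omega_{ab}\rangle\in\mathcal{H}^{\rm phys}$; (2) $|\Omega_{ab}\rangle$ depends only on the choice of the background holonomies $(a,b)$, i.e. not on the representative $\bm\sigma$ of the gauge class (for gauge-equivalent $\bm\sigma'=A_\Lambda\bm\sigma$, $\Lambda\subset\Gamma_L$, with the ground state chosen as $|\psi_{\bm\sigma'}\rangle=(-1)^{N_\Lambda}|\psi_{\bm\sigma}\rangle$, the resulting vector is the same); (3) $|\Omega_{ab}\rangle\ne0$.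
   Context: $\Gamma_L=\mathbb{Z}_L^2$ periodic square lattice; $\mathcal{C}_1$ (horizontal) and $\mathcal{C}_2$ (vertical) fixed non-contractible cycles. $\mathcal{F}_L$ fermionic Fock space over $\ell^2(\Gamma_L\times\{\uparrow,\downarrow\})$ with CAR operators $a^\pm_{i,\eta}$, $n_i=\sum_\eta a^+_{i,\eta}a^-_{i,\eta}$, $N_\Lambda=\sum_{i\in\Lambda}n_i$. $\mathcal{H}_L=\mathcal{F}_L\otimes\bigotimes_{\text{edges}}\mathbb{C}^2$ with Pauli matrices $\hat\sigma^x_{ij},\hat\sigma^z_{ij}$ on edge $\{i,j\}$; $|\bm\sigma\rangle$ is the common eigenvector of all $\hat\sigma^z_{ij}$ with eigenvalues $\sigma_{ij}$. $A_i=\prod_{j\sim i}\hat\sigma^x_{ij}$, $A_\Lambda=\prod_{i\in\Lambda}A_i$, $Q_i=A_i(-1)^{n_i}$; $\mathcal{H}^{\rm phys}=\{\Psi\in\mathcal{H}_L:Q_i\Psi=\Psi\ \forall i\}$. $|\psi_{\bm\sigma}\rangle$ is the unique ground state on $\mathcal{F}_L$ of $$H(\bm\sigma)=-t\sum_{\{i,j\}}\sum_\eta\big(a^+_{i,\eta}\sigma_{ij}a^-_{j,\eta}+\mathrm{h.c.}\big)+m\sum_i(-1)^{i_1+i_2}n_i+U\sum_i\Big(n_{i,\uparrow}-\tfrac12\Big)\Big(n_{i,\downarrow}-\tfrac12\Big).$$ *)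

theory Defs
  imports Complex_Main
begin

type_synonym site = "nat \<times> nat"
type_synonym edge = "site \<times> nat"         \<comment> \<open>(i,d): edge from i to i + e_d, d \<in> {0,1}\<close>
type_synonym gauge = "edge \<Rightarrow> int"      \<comment> \<open>sigma, values +-1 on edges, 1 elsewhere\<close>
type_synonym fvec = "nat set \<Rightarrow> complex"  \<comment> \<open>Fock vector: coefficients on occupation sets\<close>
type_synonym hvec = "nat set \<times> gauge \<Rightarrow> complex" \<comment> \<open>vector in F_L tensor edge spins\<close>

definition sites :: "nat \<Rightarrow> site set" where
  "sites L = {i. fst i < L \<and> snd i < L}"

definition sites_list :: "nat \<Rightarrow> site list" where
  "sites_list L = concat (map (\<lambda>i1. map (\<lambda>i2. (i1, i2)) [0..<L]) [0..<L])"

definition nbr :: "nat \<Rightarrow> site \<Rightarrow> nat \<Rightarrow> site" where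
  "nbr L i d = (if d = 0 then ((fst i + 1) mod L, snd i) else (fst i, (snd i + 1) mod L))"

definition edges :: "nat \<Rightarrow> edge set" where
  "edges L = {e. fst e \<in> sites L \<and> snd e < 2}"

definition incident :: "nat \<Rightarrow> site \<Rightarrow> edge set" where
  "incident L i = {e \<in> edges L. fst e = i \<or> nbr L (fst e) (snd e) = i}"

definition valid_gauge :: "nat \<Rightarrow> gauge \<Rightarrow> bool" where
  "valid_gauge L s \<longleftrightarrow> (\<forall>e \<in> edges L. s e = 1 \<or> s e = -1) \<and> (\<forall>e. e \<notin> edges L \<longrightarrow> s e = 1)"

definition plaquette :: "nat \<Rightarrow> gauge \<Rightarrow> site \<Rightarrow> int" where
  "plaquette L s i = s (i, 0) * s (nbr L i 0, 1) * s (nbr L i 1, 0) * s (i, 1)"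

text \<open>Fixed non-contractible cycles: C1 = horizontal row i2 = 0, C2 = vertical column i1 = 0.\<close>
definition hol1 :: "nat \<Rightarrow> gauge \<Rightarrow> int" where
  "hol1 L s = (\<Prod>k<L. s ((k, 0), 0))"

definition hol2 :: "nat \<Rightarrow> gauge \<Rightarrow> int" where
  "hol2 L s = (\<Prod>k<L. s ((0, k), 1))"

text \<open>Mode (i, eta) is encoded by a natural number < 2 L^2; eta = True means spin up.\<close>
definition mode :: "nat \<Rightarrow> site \<Rightarrow> bool \<Rightarrow> nat" where
  "mode L i eta = 2 * (L * fst i + snd i) + (if eta then 1 else 0)"

definition modes :: "nat \<Rightarrow> nat set" where
  "modes L = {..<2 * L * L}"

definition site_modes :: "nat \<Rightarrow> site set \<Rightarrow> nat set" where
  "site_modes L A = {mode L i eta | i eta. i \<in> A}"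

definition jw :: "nat set \<Rightarrow> nat \<Rightarrow> complex" where
  "jw n k = (-1) ^ card {l \<in> n. l < k}"

definition cre :: "nat \<Rightarrow> fvec \<Rightarrow> fvec" where
  "cre k \<psi> = (\<lambda>n. if k \<in> n then jw n k * \<psi> (n - {k}) else 0)"

definition ann :: "nat \<Rightarrow> fvec \<Rightarrow> fvec" where
  "ann k \<psi> = (\<lambda>n. if k \<notin> n then jw n k * \<psi> (insert k n) else 0)"

definition numop :: "nat \<Rightarrow> fvec \<Rightarrow> fvec" where
  "numop k \<psi> = cre k (ann k \<psi>)"

definition fvalid :: "nat \<Rightarrow> fvec \<Rightarrow> bool" where
  "fvalid L \<psi> \<longleftrightarrow> (\<forall>n. \<not> n \<subseteq> modes L \<longrightarrow> \<psi> n = 0)"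

definition shifted :: "nat \<Rightarrow> fvec \<Rightarrow> fvec" where
  "shifted k \<psi> = (\<lambda>n. numop k \<psi> n - \<psi> n / 2)"

definition Ham :: "nat \<Rightarrow> real \<Rightarrow> real \<Rightarrow> real \<Rightarrow> gauge \<Rightarrow> fvec \<Rightarrow> fvec" where
  "Ham L t m U s \<psi> = (\<lambda>n.
      - complex_of_real t * (\<Sum>e\<in>edges L. \<Sum>eta\<in>(UNIV::bool set).
          of_int (s e) *
            (cre (mode L (fst e) eta) (ann (mode L (nbr L (fst e) (snd e)) eta) \<psi>) n
           + cre (mode L (nbr L (fst e) (snd e)) eta) (ann (mode L (fst e) eta) \<psi>) n))
    + complex_of_real m * (\<Sum>i\<in>sites L. (-1) ^ (fst i + snd i) *
          (numop (mode L i True) \<psi> n + numop (mode L i False) \<psi> n))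
    + complex_of_real U * (\<Sum>i\<in>sites L.
          shifted (mode L i True) (shifted (mode L i False) \<psi>) n))"

definition is_eigvec :: "nat \<Rightarrow> (fvec \<Rightarrow> fvec) \<Rightarrow> real \<Rightarrow> fvec \<Rightarrow> bool" where
  "is_eigvec L H E \<psi> \<longleftrightarrow> fvalid L \<psi> \<and> \<psi> \<noteq> (\<lambda>_. 0) \<and> H \<psi> = (\<lambda>n. complex_of_real E * \<psi> n)"

definition unique_ground_state :: "nat \<Rightarrow> (fvec \<Rightarrow> fvec) \<Rightarrow> fvec \<Rightarrow> bool" where
  "unique_ground_state L H \<psi> \<longleftrightarrow>
     (\<exists>E. is_eigvec L H E \<psi> \<and> (\<forall>E' \<phi>. is_eigvec L H E' \<phi> \<longrightarrow> E \<le> E') \<and>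
          (\<forall>\<phi>. fvalid L \<phi> \<and> H \<phi> = (\<lambda>n. complex_of_real E * \<phi> n) \<longrightarrow> (\<exists>c. \<phi> = (\<lambda>n. c * \<psi> n) ) ) )"

definition hvalid :: "nat \<Rightarrow> hvec \<Rightarrow> bool" where
  "hvalid L \<Psi> \<longleftrightarrow> (\<forall>n s. \<Psi> (n, s) \<noteq> 0 \<longrightarrow> n \<subseteq> modes L \<and> valid_gauge L s)"

definition tensor :: "fvec \<Rightarrow> gauge \<Rightarrow> hvec" where
  "tensor \<psi> \<sigma> = (\<lambda>(n, s). if s = \<sigma> then \<psi> n else 0)"

definition flip :: "edge set \<Rightarrow> gauge \<Rightarrow> gauge" where
  "flip E s = (\<lambda>e. if e \<in> E then - s e else s e)"

text \<open>Q_i = A_i (-1)^{n_i}, A_i the product of sigma^x on the edges incident to i.\<close>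
definition Qop :: "nat \<Rightarrow> site \<Rightarrow> hvec \<Rightarrow> hvec" where
  "Qop L i \<Psi> = (\<lambda>(n, s). (-1) ^ card (n \<inter> site_modes L {i}) * \<Psi> (n, flip (incident L i) s))"

definition proj :: "nat \<Rightarrow> site \<Rightarrow> hvec \<Rightarrow> hvec" where
  "proj L i \<Psi> = (\<lambda>x. (\<Psi> x + Qop L i \<Psi> x) / 2)"

definition phys :: "nat \<Rightarrow> hvec \<Rightarrow> bool" where
  "phys L \<Psi> \<longleftrightarrow> hvalid L \<Psi> \<and> (\<forall>i \<in> sites L. Qop L i \<Psi> = \<Psi>)"

definition Omega :: "nat \<Rightarrow> gauge \<Rightarrow> fvec \<Rightarrow> hvec" where
  "Omega L \<sigma> \<psi> = foldr (proj L) (sites_list L) (tensor \<psi> \<sigma>)"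

definition gauge_transform :: "nat \<Rightarrow> site set \<Rightarrow> gauge \<Rightarrow> gauge" where
  "gauge_transform L \<Lambda> s = (\<lambda>e. s e * (-1) ^ card {i \<in> \<Lambda>. e \<in> incident L i})"

definition parity :: "nat \<Rightarrow> site set \<Rightarrow> fvec \<Rightarrow> fvec" where
  "parity L \<Lambda> \<psi> = (\<lambda>n. (-1) ^ card (n \<inter> site_modes L \<Lambda>) * \<psi> n)"

end

theory Submission
  imports Defs
begin

lemma numop_eq: "numop k \<psi> n = (if k \<in> n then \<psi> n else 0)"
proof -
  have "{l \<in> n - {k}. l < k} = {l \<in> n. l < k}" by auto
  then have "jw (n - {k}) k = jw n k" by (simp add: jw_def)
  moreover have "jw n k * jw n k = 1" by (simp add: jw_def flip: power_add) 
  ultimately show ?thesis by (auto simp: numop_def cre_def ann_def insert_absorb)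
qed

lemma shifted_eq: "shifted k \<psi> n = ((if k \<in> n then 1 else 0) - 1/2) * \<psi> n"
  by (simp add: shifted_def numop_eq algebra_simps)

lemma cre_ann_eq: "cre x (ann y \<psi>) n = (if x \<in> n \<and> y \<notin> n - {x} then jw n x * jw (n - {x}) y * \<psi> (insert y (n - {x})) else 0)"
  by (simp add: cre_def ann_def)

definition sw :: "nat \<Rightarrow> nat" where "sw k = (if even k then Suc k else k - 1)"

lemma sw_sw[simp]: "sw (sw k) = k" by (auto simp: sw_def)
lemma inj_sw: "inj sw" by (metis injI sw_sw)
lemma sw_lt2: "sw x < 2 * q \<longleftrightarrow> x < 2 * q" by (auto simp: sw_def; presburger)
lemma sw_odd: "odd (sw k) \<longleftrightarrow> even k" by (auto simp: sw_def; presburger)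
lemma mode_odd: "odd (mode L i eta) \<longleftrightarrow> eta" by (simp add: mode_def)
lemma sw_mode: "sw (mode L i eta) = mode L i (\<not> eta)" by (simp add: sw_def mode_def)
lemma sw_img_mem: "x \<in> sw ` n \<longleftrightarrow> sw x \<in> n" by (metis image_iff sw_sw)

definition cnt :: "nat set \<Rightarrow> nat \<Rightarrow> nat" where "cnt n k = card {l \<in> n. l < k}"
lemma jw_cnt: "jw n k = (-1) ^ cnt n k" by (simp add: jw_def cnt_def)

lemma cnt_Suc: "cnt n (Suc k) = cnt n k + (if k \<in> n then 1 else 0)"
proof -
  have "{l \<in> n. l < Suc k} = {l \<in> n. l < k} \<union> ({k} \<inter> n)" by auto
  moreover have "finite {l \<in> n. l < k}" by simp
  ultimately show ?thesis unfolding cnt_def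
    by (cases "k \<in> n") (simp_all add: card_Un_disjoint)
qed

lemma cnt_sw_even: "cnt (sw ` n) (2 * p) = cnt n (2 * p)"
proof -
  have "{l \<in> sw ` n. l < 2 * p} = sw ` {l \<in> n. l < 2 * p}"
    using sw_lt2 by (auto simp: image_iff)
  then show ?thesis unfolding cnt_def
    by (metis (no_types, lifting) card_image inj_sw inj_on_subset subset_UNIV)
qed

definition dd :: "nat set \<Rightarrow> nat" where "dd n = card {l \<in> n. even l \<and> Suc l \<in> n}"

lemma card_rm: "finite D \<Longrightarrow> card D = card (D - {x}) + (if x \<in> D then 1 else 0)"
proof (cases "x \<in> D")
  case True
  assume "finite D"
  then show ?thesis using True card.remove[of D x] by simp
qed simp

lemma dd_remove: assumes "finite n" "k \<in> n"
  shows "dd n = dd (n - {k}) + (if sw k \<in> n then 1 else 0)"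
proof -
  let ?D = "{l \<in> n. even l \<and> Suc l \<in> n}"
  have fD: "finite ?D" using assms by simp
  obtain x where x1: "{l \<in> n - {k}. even l \<and> Suc l \<in> n - {k}} = ?D - {x}" and x2: "x \<in> ?D \<longleftrightarrow> sw k \<in> n"
  proof (cases "even k")
    case True
    have "{l \<in> n - {k}. even l \<and> Suc l \<in> n - {k}} = ?D - {k}" using True by auto
    moreover have "k \<in> ?D \<longleftrightarrow> sw k \<in> n" using True assms by (simp add: sw_def)
    ultimately show ?thesis using that by blast
  next
    case False
    define p where "p = k div 2"
    have p: "k = Suc (2 * p)" using False unfolding p_def by presburger
    have "{l \<in> n - {k}. even l \<and> Suc l \<in> n - {k}} = ?D - {2*p}" using p by auto
    moreover have "2*p \<in> ?D \<longleftrightarrow> sw k \<in> n" using p assms by (simp add: sw_def)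
    ultimately show ?thesis using that by blast
  qed
  have "card ?D = card (?D - {x}) + (if x \<in> ?D then 1 else 0)" by (rule card_rm[OF fD])
  then show ?thesis unfolding dd_def x1 x2 .
qed

lemma core: assumes "finite n" "k' \<in> n"
  shows "(-1::complex) ^ dd n * jw (sw ` n) (sw k') = jw n k' * (-1) ^ dd (n - {k'})"
proof (cases "even k'")
  case True
  then obtain p where p: "k' = 2 * p" by auto
  have s: "sw k' = Suc (2*p)" using p by (simp add: sw_def)
  have "cnt (sw ` n) (sw k') = cnt n (2*p) + (if sw k' \<in> n then 1 else 0)"
    unfolding s cnt_Suc cnt_sw_even using sw_img_mem[of "2*p" n] s p by simp
  then show ?thesis using dd_remove[OF assms] unfolding jw_cnt p
    by (simp add: power_add) 
next
  case False
  then obtain p where p: "k' = Suc (2 * p)" by (metis oddE Suc_eq_plus1)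
  have s: "sw k' = 2*p" using p by (simp add: sw_def)
  show ?thesis using dd_remove[OF assms] unfolding jw_cnt p s cnt_Suc cnt_sw_even
    using s p by (simp add: power_add cnt_sw_even)
qed

definition fsg :: "nat set \<Rightarrow> complex" where "fsg n = (if finite n then (-1) ^ dd n else 0)"
definition TF :: "fvec \<Rightarrow> fvec" where "TF \<phi> = (\<lambda>n. fsg n * \<phi> (sw ` n))"

lemma sw_img_diff: "sw ` (n - {sw k}) = sw ` n - {k}"
  using inj_sw by (auto simp: image_iff)

lemma sw_img_insert: "sw ` (insert (sw k) n) = insert k (sw ` n)" by simp

lemma jw_sq: "jw n k * jw n k = 1" by (simp add: jw_def flip: power_add)
lemma m1_sq: "(-1::complex) ^ a * (-1) ^ a = 1" by (simp flip: power_add)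

lemma TF_cre: "TF (cre k \<phi>) = cre (sw k) (TF \<phi>)"
proof (rule ext)
  fix n
  show "TF (cre k \<phi>) n = cre (sw k) (TF \<phi>) n"
  proof (cases "finite n \<and> sw k \<in> n")
    case True
    then have "k \<in> sw ` n" using sw_img_mem by blast
    moreover have "(-1::complex) ^ dd n * jw (sw ` n) k = jw n (sw k) * (-1) ^ dd (n - {sw k})"
      using core[of n "sw k"] True by simp
    ultimately show ?thesis using True
      by (simp add: TF_def cre_def fsg_def sw_img_diff mult.assoc)
  next
    case False
    then show ?thesis by (auto simp: TF_def cre_def fsg_def sw_img_mem)
  qed
qed

lemma TF_ann: "TF (ann k \<phi>) = ann (sw k) (TF \<phi>)"
proof (rule ext)
  fix n
  show "TF (ann k \<phi>) n = ann (sw k) (TF \<phi>) n"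
  proof (cases "finite n \<and> sw k \<notin> n")
    case True
    let ?m = "insert (sw k) n"
    have k: "k \<notin> sw ` n" using True sw_img_mem by blast
    have c: "(-1::complex) ^ dd ?m * jw (sw ` ?m) (sw (sw k)) = jw ?m (sw k) * (-1) ^ dd (?m - {sw k})"
      using core[of ?m "sw k"] True by simp
    have e1: "?m - {sw k} = n" using True by auto
    have e2: "jw (sw ` ?m) k = jw (sw ` n) k"
      unfolding jw_def by (rule arg_cong[where f="\<lambda>A. (-1) ^ card A"]) auto
    have e3: "jw ?m (sw k) = jw n (sw k)"
      unfolding jw_def by (rule arg_cong[where f="\<lambda>A. (-1) ^ card A"]) auto
    have c2: "(-1::complex) ^ dd ?m * jw (sw ` n) k = jw n (sw k) * (-1) ^ dd n"
      using c e1 e2 e3 by simp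
    have c3: "(-1::complex) ^ dd n * jw (sw ` n) k = jw n (sw k) * (-1) ^ dd ?m"
    proof -
      have "(-1::complex) ^ dd n * jw (sw ` n) k = (-1) ^ dd n * jw (sw ` n) k * ((-1) ^ dd ?m * (-1) ^ dd ?m)"
        by (simp add: m1_sq)
      also have "\<dots> = (-1) ^ dd n * ((-1) ^ dd ?m * jw (sw ` n) k) * (-1) ^ dd ?m" by (simp add: ac_simps)
      also have "\<dots> = (-1) ^ dd n * (jw n (sw k) * (-1) ^ dd n) * (-1) ^ dd ?m" using c2 by simp
      also have "\<dots> = jw n (sw k) * ((-1) ^ dd n * (-1) ^ dd n) * (-1) ^ dd ?m" by (simp add: ac_simps)
      finally show ?thesis by (simp add: m1_sq)
    qed
    show ?thesis using True k c3
      by (simp add: TF_def ann_def fsg_def mult.assoc)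
  next
    case False
    then show ?thesis by (auto simp: TF_def ann_def fsg_def sw_img_mem)
  qed
qed

lemma sum_bool: "(\<Sum>\<eta>\<in>(UNIV::bool set). f \<eta>) = f True + f False"
  by (simp add: UNIV_bool add.commute)

lemma Ham_T:
  fixes w :: "nat set \<Rightarrow> complex" and g :: "nat set \<Rightarrow> nat set" and \<pi> :: "bool \<Rightarrow> bool"
  assumes phi: "\<And>n. \<phi> n = w n * \<psi> (g n)"
  and hop: "\<And>i j \<eta> n. w n * cre (mode L i \<eta>) (ann (mode L j \<eta>) \<psi>) (g n)
               = cre (mode L i (\<pi> \<eta>)) (ann (mode L j (\<pi> \<eta>)) \<phi>) n"
  and occ: "\<And>i \<eta> n. w n \<noteq> 0 \<Longrightarrow> (mode L i \<eta> \<in> g n) = (mode L i (\<pi> \<eta>) \<in> n)"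
  and pi: "\<pi> False = (\<not> \<pi> True)"
  shows "Ham L t m U s \<phi> n = w n * Ham L t m U s \<psi> (g n)"
proof -
  define hp where "hp = (\<lambda>\<chi> e \<eta> n'. cre (mode L (fst e) \<eta>) (ann (mode L (nbr L (fst e) (snd e)) \<eta>) \<chi>) n'
           + cre (mode L (nbr L (fst e) (snd e)) \<eta>) (ann (mode L (fst e) \<eta>) \<chi>) n')"
  have hp1: "w n * hp \<psi> e \<eta> (g n) = hp \<phi> e (\<pi> \<eta>) n" for e \<eta>
    unfolding hp_def distrib_left hop ..
  have hop_part: "w n * (\<Sum>e\<in>edges L. \<Sum>\<eta>\<in>(UNIV::bool set). of_int (s e) * hp \<psi> e \<eta> (g n))
      = (\<Sum>e\<in>edges L. \<Sum>\<eta>\<in>(UNIV::bool set). of_int (s e) * hp \<phi> e \<eta> n)"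
  proof -
    have "w n * (\<Sum>e\<in>edges L. \<Sum>\<eta>\<in>(UNIV::bool set). of_int (s e) * hp \<psi> e \<eta> (g n))
      = (\<Sum>e\<in>edges L. \<Sum>\<eta>\<in>(UNIV::bool set). of_int (s e) * (w n * hp \<psi> e \<eta> (g n)))"
      by (simp add: sum_distrib_left ac_simps)
    also have "\<dots> = (\<Sum>e\<in>edges L. \<Sum>\<eta>\<in>(UNIV::bool set). of_int (s e) * hp \<phi> e (\<pi> \<eta>) n)"
      by (simp add: hp1)
    also have "\<dots> = (\<Sum>e\<in>edges L. \<Sum>\<eta>\<in>(UNIV::bool set). of_int (s e) * hp \<phi> e \<eta> n)"
      using pi by (cases "\<pi> True") (simp_all add: sum_bool add.commute)
    finally show ?thesis .
  qed
  have diag: "w n * ((if mode L i \<eta> \<in> g n then 1 else 0) * \<psi> (g n))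
       = (if mode L i (\<pi> \<eta>) \<in> n then 1 else 0) * \<phi> n" for i \<eta>
    using occ[of n i \<eta>] phi[of n] by (cases "w n = 0") auto
  have mass_part: "w n * (\<Sum>i\<in>sites L. (-1) ^ (fst i + snd i) *
          (numop (mode L i True) \<psi> (g n) + numop (mode L i False) \<psi> (g n)))
      = (\<Sum>i\<in>sites L. (-1) ^ (fst i + snd i) * (numop (mode L i True) \<phi> n + numop (mode L i False) \<phi> n))"
  proof -
    have "w n * (\<Sum>i\<in>sites L. (-1) ^ (fst i + snd i) *
          (numop (mode L i True) \<psi> (g n) + numop (mode L i False) \<psi> (g n)))
      = (\<Sum>i\<in>sites L. (-1) ^ (fst i + snd i) *
          (w n * ((if mode L i True \<in> g n then 1 else 0) * \<psi> (g n)) + w n * ((if mode L i False \<in> g n then 1 else 0) * \<psi> (g n))))"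
      unfolding sum_distrib_left by (rule sum.cong) (auto simp: numop_eq algebra_simps)
    also have "\<dots> = (\<Sum>i\<in>sites L. (-1) ^ (fst i + snd i) *
          ((if mode L i (\<pi> True) \<in> n then 1 else 0) * \<phi> n + (if mode L i (\<pi> False) \<in> n then 1 else 0) * \<phi> n))"
      unfolding diag ..
    also have "\<dots> = (\<Sum>i\<in>sites L. (-1) ^ (fst i + snd i) * (numop (mode L i True) \<phi> n + numop (mode L i False) \<phi> n))"
      using pi by (cases "\<pi> True") (auto simp: numop_eq intro!: sum.cong)
    finally show ?thesis .
  qed
  have U_part: "w n * (\<Sum>i\<in>sites L. shifted (mode L i True) (shifted (mode L i False) \<psi>) (g n))
      = (\<Sum>i\<in>sites L. shifted (mode L i True) (shifted (mode L i False) \<phi>) n)"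
  proof -
    have "w n * shifted (mode L i True) (shifted (mode L i False) \<psi>) (g n)
        = shifted (mode L i True) (shifted (mode L i False) \<phi>) n" for i
    proof (cases "w n = 0")
      case True then show ?thesis using phi[of n] by (simp add: shifted_eq)
    next
      case False
      then show ?thesis using occ[OF False, of i True] occ[OF False, of i False] phi[of n] pi
        by (cases "\<pi> True") (simp_all add: shifted_eq ac_simps)
    qed
    then show ?thesis by (simp add: sum_distrib_left)
  qed
  have alt: "Ham L t m U s \<chi> n' = - complex_of_real t * (\<Sum>e\<in>edges L. \<Sum>\<eta>\<in>(UNIV::bool set). of_int (s e) * hp \<chi> e \<eta> n')
     + complex_of_real m * (\<Sum>i\<in>sites L. (-1) ^ (fst i + snd i) * (numop (mode L i True) \<chi> n' + numop (mode L i False) \<chi> n'))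
     + complex_of_real U * (\<Sum>i\<in>sites L. shifted (mode L i True) (shifted (mode L i False) \<chi>) n')" for \<chi> n'
    unfolding Ham_def hp_def by simp
  show ?thesis
    unfolding alt hop_part[symmetric] mass_part[symmetric] U_part[symmetric]
    by (simp only: distrib_left mult.left_commute[of "w n"])
qed

definition cu :: "nat set \<Rightarrow> nat" where "cu n = card {l \<in> n. odd l}"

lemma sw_sw_img[simp]: "sw ` sw ` n = n" by (simp add: image_image)

lemma cu_hop: assumes "x \<in> n" "y \<notin> n - {x}" "odd x = odd y"
  shows "cu (insert y (n - {x})) = cu n"
proof (cases "odd x")
  case True
  have e: "{l \<in> insert y (n - {x}). odd l} = insert y ({l \<in> n. odd l} - {x})" using True assms by auto
  show ?thesis
  proof (cases "finite {l \<in> n. odd l}")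
    case True
    then show ?thesis unfolding cu_def e using assms \<open>odd x\<close>
      by (simp add: card_insert_disjoint card_Diff_singleton) (metis Suc_pred card_gt_0_iff empty_iff mem_Collect_eq)
  next
    case False
    then have "infinite (insert y ({l \<in> n. odd l} - {x}))" by simp
    then show ?thesis unfolding cu_def e using False by simp
  qed
next
  case False
  have "{l \<in> insert y (n - {x}). odd l} = {l \<in> n. odd l}" using False assms by auto
  then show ?thesis unfolding cu_def by simp
qed

lemma P_hop:
  fixes a :: nat
  shows "(if cu n = a then 1 else 0) * cre (mode L i \<eta>) (ann (mode L j \<eta>) \<psi>) n
     = cre (mode L i \<eta>) (ann (mode L j \<eta>) (\<lambda>n. (if cu n = a then 1 else 0) * \<psi> n)) n"
  using cu_hop[of "mode L i \<eta>" n "mode L j \<eta>"] by (auto simp: cre_ann_eq mode_odd)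

lemma F_hop: "fsg n * cre x (ann y \<psi>) (sw ` n) = cre (sw x) (ann (sw y) (TF \<psi>)) n"
proof -
  have "fsg n * cre x (ann y \<psi>) (sw ` n) = TF (cre x (ann y \<psi>)) n" by (simp add: TF_def)
  also have "\<dots> = cre (sw x) (ann (sw y) (TF \<psi>)) n" by (simp add: TF_cre TF_ann)
  finally show ?thesis .
qed

lemma Ham_P: "Ham L t m U s (\<lambda>n. (if cu n = a then 1 else 0) * \<psi> n) n
   = (if cu n = a then 1 else 0) * Ham L t m U s \<psi> n"
  by (rule Ham_T[where g=id and \<pi>=id, simplified]) (simp_all add: P_hop)

lemma Ham_F: "Ham L t m U s (TF \<psi>) n = fsg n * Ham L t m U s \<psi> (sw ` n)"
  by (rule Ham_T[where g="\<lambda>n. sw ` n" and \<pi>=Not])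
     (simp_all add: TF_def F_hop sw_mode sw_img_mem)

lemma modes_sw: "sw ` n \<subseteq> modes L \<longleftrightarrow> n \<subseteq> modes L"
proof -
  have "sw x < 2 * L * L \<longleftrightarrow> x < 2 * L * L" for x using sw_lt2[of x "L*L"] by (simp add: mult.assoc)
  then show ?thesis by (auto simp: modes_def)
qed

lemma finite_modes: "finite (modes L)" by (simp add: modes_def)

lemma even_gs:
  assumes "unique_ground_state L (Ham L t m U \<sigma>) \<psi>"
  shows "\<exists>n0. \<psi> n0 \<noteq> 0 \<and> n0 \<subseteq> modes L \<and> even (card n0)"
proof -
  let ?H = "Ham L t m U \<sigma>"
  obtain E where eig: "is_eigvec L ?H E \<psi>"
    and uniq: "\<And>\<phi>. fvalid L \<phi> \<Longrightarrow> ?H \<phi> = (\<lambda>n. complex_of_real E * \<phi> n) \<Longrightarrow> \<exists>c. \<phi> = (\<lambda>n. c * \<psi> n)"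
    using assms unfolding unique_ground_state_def by blast
  have fv: "fvalid L \<psi>" and nz: "\<psi> \<noteq> (\<lambda>_. 0)" and He: "?H \<psi> = (\<lambda>n. complex_of_real E * \<psi> n)"
    using eig by (auto simp: is_eigvec_def)
  obtain n0 where n0: "\<psi> n0 \<noteq> 0" using nz by auto
  have n0m: "n0 \<subseteq> modes L" using fv n0 by (auto simp: fvalid_def)
  have fin: "finite n0" using n0m finite_modes finite_subset by blast
  define a where "a = cu n0"
  define \<phi>1 where "\<phi>1 = (\<lambda>n. (if cu n = a then 1 else 0) * \<psi> n)"
  have "fvalid L \<phi>1" using fv by (simp add: fvalid_def \<phi>1_def)
  moreover have "?H \<phi>1 = (\<lambda>n. complex_of_real E * \<phi>1 n)"
    unfolding \<phi>1_def by (rule ext) (simp add: Ham_P He)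
  ultimately obtain c where c: "\<phi>1 = (\<lambda>n. c * \<psi> n)" using uniq by blast
  have "c = 1" using fun_cong[OF c, of n0] n0 by (simp add: \<phi>1_def a_def)
  then have supp: "\<psi> n \<noteq> 0 \<Longrightarrow> cu n = a" for n using fun_cong[OF c, of n] by (auto simp: \<phi>1_def split: if_splits)
  have "fvalid L (TF \<psi>)"
    unfolding fvalid_def
  proof (intro allI impI)
    fix n assume "\<not> n \<subseteq> modes L"
    then have "\<not> sw ` n \<subseteq> modes L" using modes_sw by blast
    then show "TF \<psi> n = 0" using fv by (simp add: fvalid_def TF_def)
  qed
  moreover have "?H (TF \<psi>) = (\<lambda>n. complex_of_real E * TF \<psi> n)"
    by (rule ext) (simp only: Ham_F He, simp add: TF_def)
  ultimately obtain c2 where c2: "TF \<psi> = (\<lambda>n. c2 * \<psi> n)" using uniq by blast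
  have "TF \<psi> (sw ` n0) \<noteq> 0" using n0 fin by (simp add: TF_def fsg_def)
  then have "\<psi> (sw ` n0) \<noteq> 0" using fun_cong[OF c2, of "sw ` n0"] by auto
  then have "cu (sw ` n0) = a" by (rule supp)
  moreover have "cu (sw ` n0) = card {l \<in> n0. even l}"
  proof -
    have "{l \<in> sw ` n0. odd l} = sw ` {l \<in> n0. even l}" using sw_odd by (auto simp: image_iff)
    then show ?thesis unfolding cu_def
      by (metis (no_types, lifting) card_image inj_sw inj_on_subset subset_UNIV)
  qed
  moreover have "card n0 = card {l \<in> n0. odd l} + card {l \<in> n0. even l}"
  proof -
    have "n0 = {l \<in> n0. odd l} \<union> {l \<in> n0. even l}" by auto
    then show ?thesis using fin by (metis (no_types, lifting) card_Un_disjoint finite_Un disjoint_iff mem_Collect_eq)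
  qed
  ultimately have "card n0 = 2 * a" by (simp add: a_def cu_def)
  then show ?thesis using n0 n0m by auto
qed

lemma Qop_app: "Qop L i \<Psi> (n, s) = (-1) ^ card (n \<inter> site_modes L {i}) * \<Psi> (n, flip (incident L i) s)"
  by (simp add: Qop_def)

lemma flip_flip[simp]: "flip A (flip A s) = s" by (auto simp: flip_def)
lemma flip_comm: "flip A (flip B s) = flip B (flip A s)" by (auto simp: flip_def)

lemma Qop_Qop: "Qop L i (Qop L i \<Psi>) = \<Psi>"
  by (rule ext) (auto simp: Qop_app m1_sq mult.assoc[symmetric])

lemma Qop_comm: "Qop L i (Qop L j \<Psi>) = Qop L j (Qop L i \<Psi>)"
  by (rule ext) (auto simp: Qop_app flip_comm ac_simps)

lemma Qop_proj: "Qop L i (proj L j \<Psi>) = proj L j (Qop L i \<Psi>)"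
proof (rule ext, clarify)
  fix n s
  have "Qop L i (proj L j \<Psi>) (n, s) = ((-1) ^ card (n \<inter> site_modes L {i}) * \<Psi> (n, flip (incident L i) s)
     + (-1) ^ card (n \<inter> site_modes L {i}) * Qop L j \<Psi> (n, flip (incident L i) s)) / 2"
    by (simp add: Qop_app proj_def algebra_simps add_divide_distrib)
  also have "\<dots> = (Qop L i \<Psi> (n, s) + Qop L i (Qop L j \<Psi>) (n, s)) / 2"
    by (simp only: Qop_app)
  also have "\<dots> = proj L j (Qop L i \<Psi>) (n, s)" by (simp add: proj_def Qop_comm)
  finally show "Qop L i (proj L j \<Psi>) (n, s) = proj L j (Qop L i \<Psi>) (n, s)" .
qed

lemma Qop_proj_same: "Qop L i (proj L i \<Psi>) = proj L i \<Psi>"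
proof (rule ext, clarify)
  fix n s
  have "Qop L i (proj L i \<Psi>) (n, s) = proj L i (Qop L i \<Psi>) (n, s)" by (simp add: Qop_proj)
  also have "\<dots> = proj L i \<Psi> (n, s)" by (simp add: proj_def Qop_Qop add.commute)
  finally show "Qop L i (proj L i \<Psi>) (n, s) = proj L i \<Psi> (n, s)" .
qed

lemma foldr_Q_comm: "foldr (proj L) xs (Qop L i \<Psi>) = Qop L i (foldr (proj L) xs \<Psi>)"
  by (induction xs) (simp_all add: Qop_proj)

lemma foldr_Q_fix: "i \<in> set xs \<Longrightarrow> Qop L i (foldr (proj L) xs \<Psi>) = foldr (proj L) xs \<Psi>"
proof (induction xs)
  case Nil then show ?case by simp
next
  case (Cons j ys)
  show ?case
  proof (cases "i = j")
    case True then show ?thesis by (simp add: Qop_proj_same)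
  next
    case False then show ?thesis using Cons by (simp add: Qop_proj)
  qed
qed

lemma foldr_Q_absorb: "i \<in> set xs \<Longrightarrow> foldr (proj L) xs (Qop L i \<Psi>) = foldr (proj L) xs \<Psi>"
  by (simp add: foldr_Q_comm foldr_Q_fix)

definition QS :: "nat \<Rightarrow> site set \<Rightarrow> hvec \<Rightarrow> hvec" where
  "QS L \<Lambda> \<Psi> = (\<lambda>(n, s). (-1) ^ card (n \<inter> site_modes L \<Lambda>) * \<Psi> (n, gauge_transform L \<Lambda> s))"

lemma QS_app: "QS L \<Lambda> \<Psi> (n, s) = (-1) ^ card (n \<inter> site_modes L \<Lambda>) * \<Psi> (n, gauge_transform L \<Lambda> s)"
  by (simp add: QS_def)

lemma gt_empty: "gauge_transform L {} s = s" by (simp add: gauge_transform_def)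

lemma site_modes_empty: "site_modes L {} = {}" by (simp add: site_modes_def)

lemma QS_empty: "QS L {} \<Psi> = \<Psi>"
  by (rule ext) (auto simp: QS_def gt_empty site_modes_empty)

lemma mode_inj: assumes "i \<in> sites L" "j \<in> sites L" "mode L i a = mode L j b"
  shows "i = j \<and> a = b"
proof -
  have ab: "a = b" using assms(3) mode_odd by metis
  then have e: "L * fst i + snd i = L * fst j + snd j" using assms(3) by (simp add: mode_def)
  have "snd i < L" "snd j < L" using assms by (auto simp: sites_def)
  then have "snd i = snd j" "fst i = fst j" using e
    by (metis add.commute mod_mult_self2 mod_less, metis add.commute div_mult_self2 div_less add_0 mult.commute not_less0 gr_implies_not0 \<open>snd i < L\<close> \<open>snd j < L\<close>)
  then show ?thesis using ab by (simp add: prod_eq_iff)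
qed

lemma site_modes_img: "site_modes L A = (\<lambda>(i, eta). mode L i eta) ` (A \<times> UNIV)"
  by (auto simp: site_modes_def)

lemma finite_site_modes: "finite A \<Longrightarrow> finite (site_modes L A)"
  unfolding site_modes_img by simp

lemma card_sm_insert:
  assumes "finite \<Lambda>" "i \<notin> \<Lambda>" "i \<in> sites L" "\<Lambda> \<subseteq> sites L"
  shows "card (n \<inter> site_modes L (insert i \<Lambda>)) = card (n \<inter> site_modes L {i}) + card (n \<inter> site_modes L \<Lambda>)"
proof -
  have u: "n \<inter> site_modes L (insert i \<Lambda>) = (n \<inter> site_modes L {i}) \<union> (n \<inter> site_modes L \<Lambda>)"
    unfolding site_modes_img by auto
  have d: "(n \<inter> site_modes L {i}) \<inter> (n \<inter> site_modes L \<Lambda>) = {}"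
    using assms mode_inj by (auto simp: site_modes_def) blast
  show ?thesis unfolding u
    by (rule card_Un_disjoint) (use assms finite_site_modes d in auto)
qed

lemma gt_insert:
  assumes "finite \<Lambda>" "i \<notin> \<Lambda>"
  shows "gauge_transform L \<Lambda> (flip (incident L i) s) = gauge_transform L (insert i \<Lambda>) s"
proof (rule ext)
  fix e
  show "gauge_transform L \<Lambda> (flip (incident L i) s) e = gauge_transform L (insert i \<Lambda>) s e"
  proof (cases "e \<in> incident L i")
    case True
    then have "{j \<in> insert i \<Lambda>. e \<in> incident L j} = insert i {j \<in> \<Lambda>. e \<in> incident L j}" by auto
    moreover have "card (insert i {j \<in> \<Lambda>. e \<in> incident L j}) = Suc (card {j \<in> \<Lambda>. e \<in> incident L j})"
      using assms by (simp add: card_insert_disjoint)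
    ultimately show ?thesis using True by (simp add: gauge_transform_def flip_def)
  next
    case False
    then have "{j \<in> insert i \<Lambda>. e \<in> incident L j} = {j \<in> \<Lambda>. e \<in> incident L j}" by auto
    then show ?thesis using False by (simp add: gauge_transform_def flip_def)
  qed
qed

lemma Qop_QS:
  assumes "finite \<Lambda>" "i \<notin> \<Lambda>" "i \<in> sites L" "\<Lambda> \<subseteq> sites L"
  shows "Qop L i (QS L \<Lambda> \<Psi>) = QS L (insert i \<Lambda>) \<Psi>"
  by (rule ext) (auto simp: Qop_app QS_app gt_insert[OF assms(1,2)] card_sm_insert[OF assms] power_add)

lemma foldr_QS:
  assumes "finite \<Lambda>" "\<Lambda> \<subseteq> set xs" "\<Lambda> \<subseteq> sites L"
  shows "foldr (proj L) xs (QS L \<Lambda> \<Psi>) = foldr (proj L) xs \<Psi>"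
  using assms
proof (induction \<Lambda> rule: finite_induct)
  case empty then show ?case by (simp add: QS_empty)
next
  case (insert i F)
  have "QS L (insert i F) \<Psi> = Qop L i (QS L F \<Psi>)" using insert by (simp add: Qop_QS)
  then show ?case using insert by (simp add: foldr_Q_absorb)
qed

lemma gt_gt: "gauge_transform L \<Lambda> (gauge_transform L \<Lambda> s) = s"
  by (rule ext) (simp add: gauge_transform_def mult.assoc flip: power_add)

lemma tensor_parity: "tensor (parity L \<Lambda> \<psi>) (gauge_transform L \<Lambda> \<sigma>) = QS L \<Lambda> (tensor \<psi> \<sigma>)"
proof (rule ext, clarify)
  fix n s
  have "(gauge_transform L \<Lambda> s = \<sigma>) = (s = gauge_transform L \<Lambda> \<sigma>)" using gt_gt by metis
  then show "tensor (parity L \<Lambda> \<psi>) (gauge_transform L \<Lambda> \<sigma>) (n, s) = QS L \<Lambda> (tensor \<psi> \<sigma>) (n, s)"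
    by (simp add: tensor_def parity_def QS_app)
qed

lemma set_sites_list: "set (sites_list L) = sites L"
  by (auto simp: sites_list_def sites_def)

lemma distinct_sites_list: "distinct (sites_list L)"
  unfolding sites_list_def
  by (rule distinct_concat) (auto simp: distinct_map inj_on_def)

lemma finite_sites: "finite (sites L)"
proof -
  have "sites L = {..<L} \<times> {..<L}" by (auto simp: sites_def)
  then show ?thesis by simp
qed

lemma valid_flip: "valid_gauge L (flip (incident L i) s) \<Longrightarrow> valid_gauge L s"
  unfolding valid_gauge_def flip_def incident_def
  by (smt (verit, ccfv_threshold) mem_Collect_eq)

lemma hvalid_Qop: "hvalid L \<Psi> \<Longrightarrow> hvalid L (Qop L i \<Psi>)"
  unfolding hvalid_def by (auto simp: Qop_app intro: valid_flip)

lemma hvalid_proj: "hvalid L \<Psi> \<Longrightarrow> hvalid L (proj L i \<Psi>)"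
proof -
  assume h: "hvalid L \<Psi>"
  then have h2: "hvalid L (Qop L i \<Psi>)" by (rule hvalid_Qop)
  show ?thesis unfolding hvalid_def
  proof (intro allI impI)
    fix n s assume "proj L i \<Psi> (n, s) \<noteq> 0"
    then have "\<Psi> (n, s) \<noteq> 0 \<or> Qop L i \<Psi> (n, s) \<noteq> 0" by (auto simp: proj_def)
    then show "n \<subseteq> modes L \<and> valid_gauge L s" using h h2 unfolding hvalid_def by blast
  qed
qed

lemma hvalid_foldr: "hvalid L \<Psi> \<Longrightarrow> hvalid L (foldr (proj L) xs \<Psi>)"
  by (induction xs) (simp_all add: hvalid_proj)

lemma hvalid_tensor: "fvalid L \<psi> \<Longrightarrow> valid_gauge L \<sigma> \<Longrightarrow> hvalid L (tensor \<psi> \<sigma>)"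
  by (auto simp: hvalid_def tensor_def fvalid_def)

lemma foldr_expand:
  "distinct xs \<Longrightarrow> set xs \<subseteq> sites L \<Longrightarrow>
   foldr (proj L) xs \<Psi> = (\<lambda>x. (\<Sum>\<Lambda>\<in>Pow (set xs). QS L \<Lambda> \<Psi> x) / 2 ^ length xs)"
proof (induction xs)
  case Nil
  then show ?case by (simp add: QS_empty)
next
  case (Cons i xs)
  let ?S = "\<lambda>x. \<Sum>\<Lambda>\<in>Pow (set xs). QS L \<Lambda> \<Psi> x"
  let ?S' = "\<lambda>x. \<Sum>\<Lambda>\<in>Pow (set xs). QS L (insert i \<Lambda>) \<Psi> x"
  let ?c = "(2::complex) ^ length xs"
  have ix: "i \<notin> set xs" and ii: "i \<in> sites L" and xs: "set xs \<subseteq> sites L" using Cons.prems by auto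
  have IH: "foldr (proj L) xs \<Psi> = (\<lambda>x. ?S x / ?c)" using Cons by simp
  have Q: "Qop L i (\<lambda>x. ?S x / ?c) = (\<lambda>x. ?S' x / ?c)"
  proof (rule ext, clarify)
    fix n s
    have "Qop L i (\<lambda>x. ?S x / ?c) (n, s)
        = (\<Sum>\<Lambda>\<in>Pow (set xs). Qop L i (QS L \<Lambda> \<Psi>) (n, s)) / ?c"
      by (simp add: Qop_app sum_distrib_left)
    also have "\<dots> = ?S' (n, s) / ?c"
    proof -
      have "Qop L i (QS L \<Lambda> \<Psi>) = QS L (insert i \<Lambda>) \<Psi>" if "\<Lambda> \<in> Pow (set xs)" for \<Lambda>
        using that ix ii xs by (intro Qop_QS) (auto intro: finite_subset)
      then show ?thesis by simp
    qed
    finally show "Qop L i (\<lambda>x. ?S x / ?c) (n, s) = ?S' (n, s) / ?c" .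
  qed
  have sumP: "(\<Sum>\<Lambda>\<in>Pow (set (i # xs)). QS L \<Lambda> \<Psi> x) = ?S x + ?S' x" for x
  proof -
    have "Pow (set (i # xs)) = Pow (set xs) \<union> insert i ` Pow (set xs)" by (simp add: Pow_insert)
    moreover have "Pow (set xs) \<inter> insert i ` Pow (set xs) = {}" using ix by auto
    moreover have "inj_on (insert i) (Pow (set xs))" using ix unfolding inj_on_def
      by (metis PowD insert_ident subset_iff)
    ultimately show ?thesis
      by (simp add: sum.union_disjoint sum.reindex)
  qed
  show ?case
  proof (rule ext)
    fix x
    have "foldr (proj L) (i # xs) \<Psi> x = proj L i (\<lambda>x. ?S x / ?c) x" using IH by simp
    also have "\<dots> = (?S x / ?c + ?S' x / ?c) / 2" unfolding proj_def Q by simp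
    also have "\<dots> = (\<Sum>\<Lambda>\<in>Pow (set (i # xs)). QS L \<Lambda> \<Psi> x) / 2 ^ length (i # xs)"
      unfolding sumP by (simp add: add_divide_distrib mult.commute)
    finally show "foldr (proj L) (i # xs) \<Psi> x = (\<Sum>\<Lambda>\<in>Pow (set (i # xs)). QS L \<Lambda> \<Psi> x) / 2 ^ length (i # xs)" .
  qed
qed

lemma incident_edge: "e \<in> edges L \<Longrightarrow> {j \<in> \<Lambda>. e \<in> incident L j} = \<Lambda> \<inter> {fst e, nbr L (fst e) (snd e)}"
  by (auto simp: incident_def)

lemma Suc_mod_ne: "2 \<le> L \<Longrightarrow> a < L \<Longrightarrow> Suc a mod L \<noteq> a"
proof (cases "Suc a < L")
  case True then show ?thesis by simp
next
  case False
  assume "2 \<le> L" "a < L"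
  then have "Suc a = L" using False by simp
  then show ?thesis using \<open>2 \<le> L\<close> by simp
qed

lemma nbr_ne: "2 \<le> L \<Longrightarrow> i \<in> sites L \<Longrightarrow> nbr L i d \<noteq> i"
  using Suc_mod_ne[of L "fst i"] Suc_mod_ne[of L "snd i"]
  by (auto simp: nbr_def sites_def prod_eq_iff)

lemma nbr_sites: "0 < L \<Longrightarrow> i \<in> sites L \<Longrightarrow> nbr L i d \<in> sites L"
  by (auto simp: nbr_def sites_def)

lemma gt_fix_closed:
  assumes vg: "valid_gauge L \<sigma>" and L2: "2 \<le> L" and fx: "gauge_transform L \<Lambda> \<sigma> = \<sigma>"
    and i: "i \<in> sites L" and d: "d < 2"
  shows "i \<in> \<Lambda> \<longleftrightarrow> nbr L i d \<in> \<Lambda>"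
proof (rule ccontr)
  assume ne: "\<not> (i \<in> \<Lambda> \<longleftrightarrow> nbr L i d \<in> \<Lambda>)"
  have e: "(i, d) \<in> edges L" using i d by (simp add: edges_def)
  have s: "\<sigma> (i, d) = 1 \<or> \<sigma> (i, d) = -1" using vg e by (simp add: valid_gauge_def)
  have "\<sigma> (i, d) * (-1) ^ card {j \<in> \<Lambda>. (i, d) \<in> incident L j} = \<sigma> (i, d)"
    using fun_cong[OF fx, of "(i, d)"] by (simp add: gauge_transform_def)
  then have p: "(-1::int) ^ card {j \<in> \<Lambda>. (i, d) \<in> incident L j} = 1" using s by auto
  have "{j \<in> \<Lambda>. (i, d) \<in> incident L j} = \<Lambda> \<inter> {i, nbr L i d}" using incident_edge[OF e] by simp
  moreover have "\<Lambda> \<inter> {i, nbr L i d} = {i} \<or> \<Lambda> \<inter> {i, nbr L i d} = {nbr L i d}"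
    using ne nbr_ne[OF L2 i, of d] by auto
  ultimately have "card {j \<in> \<Lambda>. (i, d) \<in> incident L j} = 1" by auto
  then show False using p by simp
qed

lemma closed_all:
  assumes sub: "\<Lambda> \<subseteq> sites L" and L0: "0 < L"
    and cl: "\<And>i d. i \<in> sites L \<Longrightarrow> d < 2 \<Longrightarrow> (i \<in> \<Lambda> \<longleftrightarrow> nbr L i d \<in> \<Lambda>)"
    and ne: "\<Lambda> \<noteq> {}"
  shows "\<Lambda> = sites L"
proof
  show "\<Lambda> \<subseteq> sites L" by (rule sub)
  obtain p q where pq: "(p, q) \<in> \<Lambda>" using ne by auto
  then have pL: "p < L" "q < L" using sub by (auto simp: sites_def)
  have row: "((p + k) mod L, q) \<in> \<Lambda>" for k
  proof (induction k)
    case 0 then show ?case using pq pL by simp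
  next
    case (Suc k)
    have "((p + k) mod L, q) \<in> sites L" using L0 pL by (simp add: sites_def)
    then have "nbr L ((p + k) mod L, q) 0 \<in> \<Lambda>" using cl[of "((p + k) mod L, q)" 0] Suc by simp
    then show ?case by (simp add: nbr_def mod_Suc_eq)
  qed
  have col: "(x, (q + k) mod L) \<in> \<Lambda>" if x: "x < L" for x k
  proof (induction k)
    case 0
    have "(p + (x + L - p)) mod L = x" using x pL by simp
    then show ?case using row[of "x + L - p"] pL by simp
  next
    case (Suc k)
    have "(x, (q + k) mod L) \<in> sites L" using L0 x by (simp add: sites_def)
    then have "nbr L (x, (q + k) mod L) 1 \<in> \<Lambda>" using cl[of "(x, (q + k) mod L)" 1] Suc by simp
    then show ?case by (simp add: nbr_def mod_Suc_eq)
  qed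
  show "sites L \<subseteq> \<Lambda>"
  proof
    fix j assume j: "j \<in> sites L"
    then have "(q + (snd j + L - q)) mod L = snd j" using pL by (simp add: sites_def)
    then show "j \<in> \<Lambda>" using col[of "fst j" "snd j + L - q"] j by (simp add: sites_def)
  qed
qed

lemma gt_sites: assumes "2 \<le> L" shows "gauge_transform L (sites L) s = s"
proof (rule ext)
  fix e
  show "gauge_transform L (sites L) s e = s e"
  proof (cases "e \<in> edges L")
    case True
    then have fs: "fst e \<in> sites L" by (simp add: edges_def)
    have "{j \<in> sites L. e \<in> incident L j} = {fst e, nbr L (fst e) (snd e)}"
      using incident_edge[OF True] fs nbr_sites[OF _ fs] assms by auto
    moreover have "card {fst e, nbr L (fst e) (snd e)} = 2"
      using nbr_ne[OF assms fs, of "snd e"] by simp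
    ultimately show ?thesis by (simp add: gauge_transform_def)
  next
    case False
    then have "{j \<in> sites L. e \<in> incident L j} = {}" by (auto simp: incident_def)
    then have c: "card {j \<in> sites L. e \<in> incident L j} = 0" by (simp only: card.empty)
    show ?thesis unfolding gauge_transform_def c by simp
  qed
qed

lemma modes_sub: "modes L \<subseteq> site_modes L (sites L)"
proof
  fix k assume "k \<in> modes L"
  then have k: "k < 2 * L * L" by (simp add: modes_def)
  define q where "q = k div 2"
  have qL: "q < L * L" using k unfolding q_def by simp
  then have L0: "0 < L" by (cases L) auto
  have "q div L < L" using qL by (simp add: less_mult_imp_div_less)
  moreover have "q mod L < L" using L0 by simp
  ultimately have s: "(q div L, q mod L) \<in> sites L" by (simp add: sites_def)
  have "mode L (q div L, q mod L) (odd k) = k"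
    unfolding mode_def q_def by simp
  then show "k \<in> site_modes L (sites L)" using s unfolding site_modes_def by (metis (mono_tags, lifting) mem_Collect_eq)
qed

theorem proposition2:
  fixes t m :: real
  assumes "t > 0" and "m > 0"
  shows "\<exists>U0 > 0. \<forall>(L::nat) (U::real) (\<sigma>::gauge) (a::int) (b::int) (\<psi>::fvec).
     L > 0 \<and> 4 dvd L \<and> \<bar>U\<bar> < U0 \<and>
     a \<in> {1, -1} \<and> b \<in> {1, -1} \<and>
     valid_gauge L \<sigma> \<and> (\<forall>i \<in> sites L. plaquette L \<sigma> i = -1) \<and>
     hol1 L \<sigma> = a \<and> hol2 L \<sigma> = b \<and>
     unique_ground_state L (Ham L t m U \<sigma>) \<psi>
     \<longrightarrow> phys L (Omega L \<sigma> \<psi>)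
       \<and> (\<forall>\<Lambda> \<subseteq> sites L. Omega L (gauge_transform L \<Lambda> \<sigma>) (parity L \<Lambda> \<psi>) = Omega L \<sigma> \<psi>)
       \<and> Omega L \<sigma> \<psi> \<noteq> (\<lambda>_. 0)"
proof (rule exI[of _ "1::real"], rule conjI[OF zero_less_one], intro allI impI)
  fix L :: nat and U :: real and \<sigma> :: gauge and a b :: int and \<psi> :: fvec
  assume H: "L > 0 \<and> 4 dvd L \<and> \<bar>U\<bar> < 1 \<and>
     a \<in> {1, -1} \<and> b \<in> {1, -1} \<and>
     valid_gauge L \<sigma> \<and> (\<forall>i \<in> sites L. plaquette L \<sigma> i = -1) \<and>
     hol1 L \<sigma> = a \<and> hol2 L \<sigma> = b \<and>
     unique_ground_state L (Ham L t m U \<sigma>) \<psi>"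
  have L0: "0 < L" and vg: "valid_gauge L \<sigma>" and ug: "unique_ground_state L (Ham L t m U \<sigma>) \<psi>"
    using H by auto
  have L2: "2 \<le> L" using H by (auto dest: dvd_imp_le)
  have fv: "fvalid L \<psi>" using ug by (auto simp: unique_ground_state_def is_eigvec_def)
  let ?xs = "sites_list L"
  have sl: "set ?xs = sites L" by (rule set_sites_list)
  have ds: "distinct ?xs" by (rule distinct_sites_list)
  have P1: "phys L (Omega L \<sigma> \<psi>)"
    unfolding phys_def Omega_def
    using hvalid_foldr[OF hvalid_tensor[OF fv vg]] foldr_Q_fix sl by auto
  have P2: "\<forall>\<Lambda> \<subseteq> sites L. Omega L (gauge_transform L \<Lambda> \<sigma>) (parity L \<Lambda> \<psi>) = Omega L \<sigma> \<psi>"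
  proof (intro allI impI)
    fix \<Lambda> assume sub: "\<Lambda> \<subseteq> sites L"
    then have "finite \<Lambda>" using finite_sites finite_subset by blast
    then show "Omega L (gauge_transform L \<Lambda> \<sigma>) (parity L \<Lambda> \<psi>) = Omega L \<sigma> \<psi>"
      unfolding Omega_def tensor_parity using foldr_QS sub sl by simp
  qed
  obtain n0 where n0: "\<psi> n0 \<noteq> 0" "n0 \<subseteq> modes L" "even (card n0)" using even_gs[OF ug] by blast
  let ?f = "\<lambda>\<Lambda>. QS L \<Lambda> (tensor \<psi> \<sigma>) (n0, \<sigma>)"
  have exp: "Omega L \<sigma> \<psi> (n0, \<sigma>) = (\<Sum>\<Lambda>\<in>Pow (sites L). ?f \<Lambda>) / 2 ^ length ?xs"
    unfolding Omega_def foldr_expand[OF ds, of L, unfolded sl, OF subset_refl] by simp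
  have zero: "?f \<Lambda> = 0" if "\<Lambda> \<in> Pow (sites L) - {{}, sites L}" for \<Lambda>
  proof (rule ccontr)
    assume "?f \<Lambda> \<noteq> 0"
    then have fx: "gauge_transform L \<Lambda> \<sigma> = \<sigma>" by (simp add: QS_app tensor_def split: if_splits)
    have "\<Lambda> = sites L"
      using that gt_fix_closed[OF vg L2 fx] by (intro closed_all[OF _ L0]) auto
    then show False using that by simp
  qed
  have ne: "{} \<noteq> sites L" using L0 by (auto simp: sites_def)
  have "(\<Sum>\<Lambda>\<in>Pow (sites L). ?f \<Lambda>) = (\<Sum>\<Lambda>\<in>{{}, sites L}. ?f \<Lambda>)"
    by (rule sum.mono_neutral_right) (use finite_sites zero in auto)
  also have "\<dots> = ?f {} + ?f (sites L)" using ne by simp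
  also have "\<dots> = 2 * \<psi> n0"
  proof -
    have "n0 \<inter> site_modes L (sites L) = n0" using n0(2) modes_sub by blast
    then show ?thesis using n0(3) by (simp add: QS_empty QS_app gt_sites[OF L2] tensor_def)
  qed
  finally have "Omega L \<sigma> \<psi> (n0, \<sigma>) \<noteq> 0" using exp n0(1) by simp
  then have "Omega L \<sigma> \<psi> \<noteq> (\<lambda>_. 0)" by auto
  then show "phys L (Omega L \<sigma> \<psi>)
       \<and> (\<forall>\<Lambda> \<subseteq> sites L. Omega L (gauge_transform L \<Lambda> \<sigma>) (parity L \<Lambda> \<psi>) = Omega L \<sigma> \<psi>)
       \<and> Omega L \<sigma> \<psi> \<noteq> (\<lambda>_. 0)" using P1 P2 by blast
qed

end
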